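(* For all integers $n,f,k$ with $1\le f\le n-1$ and $1\le k\le n$, the task $k\text{-TAg}(n+1,f)$ is $C^*$-reducible to $k\text{-TAg}(n,f)$. (The algorithm of the preceding $C^*$-reduction, with $\Pi=\{1,\dots,n+1\}$, $\Pi_i=\Pi\setminus\{i\}$, in which each process $i$ queries the oracles $\mathcal O.k\text{-TAg}(\Pi_l,f)$, $l\ne i$, in order with its initial value and broadcasts each answer, but finally decides $\min_l w_l$ instead of $\max_l w_l$, solves $k\text{-TAg}(\Pi,f)$.)
   Context: Model: a finite set of processes runs an asynchronous algorithm communicating by reliable message passing with unbounded delays and speeds; processes fail only by crashing. Time is $\mathcal T=\mathbb N$; a failure pattern $F$ for $\Pi$ is a nondecreasing map $\mathcal T\to2^\Pi$, $Faulty(F)=\bigcup_tF(t)$. A binary agreement problem $P$ for $\Pi$ maps each $(F,\vec V)$, $\vec V\in\{0,1\}^\Pi$, to a nonempty $P(F,\vec V)\subseteq\{0,1\}$; a task is $T=(P,f)$. An algorithm solves $T$ if in every run with $|Faulty(F)|\le f$ and initial values $\vec V$: every correct process eventually decides, decisions are irrevocable, no two processes decide differently, and decisions lie in $P(F,\vec V)$. $k\text{-TAg}_\Pi(F,\vec V)=\{0\}$ if at least $k$ entries of $\vec V$ are $0$; $=\{1\}$ if $\vec V$ is all-ones and $|Faulty(F)|\le k-1$; $=\{0,1\}$ otherwise; $k\text{-TAg}(\Pi,f)=(k\text{-TAg}_\Pi,f)$; $k\text{-TAg}(n,f)=k\text{-TAg}(\{1,\dots,n\},f)$. Oracles: for $T=(P,f)$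 on process set $\Pi'$, $\mathcal O.T$ is a black box with consultants $\Pi'$; its history is a sequence of successive consultations, in each of which every consultant may submit at most one query in $\{0,1\}$ and the oracle returns a common response $d$ with $d\in P(F,\vec V)$ for every $\vec V$ extending the partial query vector (the oracle may use the whole failure pattern, including future crashes), and every correct querier gets the response whenever at least $|\Pi'|-f$ consultants query; $\mathcal O.T$ is the most general such oracle. $C^*$-reduction: $T_1\le_{C^*}T_2$ if there is an algorithm solving $T_1$ whose processes may additionally consult any finite collection of oracles $\mathcal O.T_2^{(j)}$, each $T_2^{(j)}$ being a copy of $T_2$ whose processes are renamed into (a subset of) the processes of $T_1$. *)

theory Defs
  imports Main
begin

type_synonym proc = nat

text \<open>A failure pattern maps each time to the set of processes crashed by that time.\<close>
type_synonym fpat = "nat \<Rightarrow> proc set"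

definition failure_pattern :: "proc set \<Rightarrow> fpat \<Rightarrow> bool" where
  "failure_pattern \<Pi> F \<longleftrightarrow> mono F \<and> (\<forall>t. F t \<subseteq> \<Pi>)"

definition Faulty :: "fpat \<Rightarrow> proc set" where
  "Faulty F = (\<Union>t. F t)"

text \<open>A (binary agreement) problem maps a failure pattern and an input vector to the set
  of admissible decision values (values 0 and 1 are represented as naturals).\<close>
type_synonym problem = "fpat \<Rightarrow> (proc \<Rightarrow> nat) \<Rightarrow> nat set"

record task =
  procs :: "proc set"
  prob  :: problem
  res   :: nat

definition ktag_prob :: "proc set \<Rightarrow> nat \<Rightarrow> problem" where
  "ktag_prob \<Pi> k F V =
     (if k \<le> card {p \<in> \<Pi>. V p = 0} then {0}
      else if (\<forall>p\<in>\<Pi>. V p = 1) \<and> card (Faulty F) \<le> k - 1 then {1}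
      else {0, 1})"

definition kTAg :: "proc set \<Rightarrow> nat \<Rightarrow> nat \<Rightarrow> task" where
  "kTAg \<Pi> k f = \<lparr>procs = \<Pi>, prob = ktag_prob \<Pi> k, res = f\<rparr>"

definition kTAg_n :: "nat \<Rightarrow> nat \<Rightarrow> nat \<Rightarrow> task" where
  "kTAg_n n k f = kTAg {1..n} k f"

definition renamed_copy :: "task \<Rightarrow> (proc \<Rightarrow> proc) \<Rightarrow> task" where
  "renamed_copy T \<rho> =
     \<lparr>procs = \<rho> ` procs T,
      prob = (\<lambda>F' V'. prob T (\<lambda>t. {p \<in> procs T. \<rho> p \<in> F' t}) (V' \<circ> \<rho>)),
      res = res T\<rparr>"

text \<open>Input of a single step: nothing, the receipt of one message (sender, content),
  or a response of oracle \<open>j\<close> to consultation \<open>c\<close> with value \<open>d\<close>.\<close>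
datatype 'm input = Null | Recv proc 'm | Resp nat nat nat

text \<open>A deterministic algorithm: initial state from the initial value; a step maps the
  current state and the input to the new state, a list of messages to send
  (destination, content) and a list of oracle queries (oracle index, query value);
  the decision (if any) is read off the local state.\<close>
record ('s, 'm) algo =
  ainit  :: "proc \<Rightarrow> nat \<Rightarrow> 's"
  atrans :: "proc \<Rightarrow> 's \<Rightarrow> 'm input \<Rightarrow> 's \<times> (proc \<times> 'm) list \<times> (nat \<times> nat) list"
  adec   :: "'s \<Rightarrow> nat option"

definition step_out ::
  "('s,'m) algo \<Rightarrow> (nat \<Rightarrow> proc \<Rightarrow> 's) \<Rightarrow> (nat \<Rightarrow> proc option) \<Rightarrow> (nat \<Rightarrow> 'm input) \<Rightarrow> nat
    \<Rightarrow> (proc \<times> 'm) list \<times> (nat \<times> nat) list" where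
  "step_out A st act inp t =
     (case act t of None \<Rightarrow> ([], []) | Some p \<Rightarrow> snd (atrans A p (st t p) (inp t)))"

definition sends where
  "sends A st act inp t = fst (step_out A st act inp t)"

definition queries where
  "queries A st act inp t = snd (step_out A st act inp t)"

text \<open>The \<open>c\<close>-th query of \<open>p\<close> to oracle \<open>j\<close> is its query in consultation \<open>c\<close>.\<close>
definition qlist where
  "qlist A st act inp j p t =
     concat (map (\<lambda>t'. if act t' = Some p
                        then map snd (filter (\<lambda>q. fst q = j) (queries A st act inp t'))
                        else []) [0..<t])"

definition queried where
  "queried A st act inp C j c p v \<longleftrightarrow>
     p \<in> C \<and> (\<exists>t. c < length (qlist A st act inp j p t) \<and> qlist A st act inp j p t ! c = v)"

definition valid_resp where
  "valid_resp A st act inp Oc F j c d \<longleftrightarrow>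
     (\<forall>V'. (\<forall>p\<in>procs Oc. V' p \<in> {0, 1}) \<and>
           (\<forall>p v. queried A st act inp (procs Oc) j c p v \<longrightarrow> V' p = v)
        \<longrightarrow> d \<in> prob Oc (\<lambda>t. F t \<inter> procs Oc) V')"

definition recv_events where
  "recv_events act inp = {t. act t \<noteq> None \<and> (\<exists>p m. inp t = Recv p m)}"

text \<open>Admissible runs of algorithm \<open>A\<close> on processes \<open>\<Pi>\<close> using the oracles \<open>Os\<close>, with
  failure pattern \<open>F\<close> and initial values \<open>V\<close>: \<open>st t p\<close> is the state of \<open>p\<close> at time \<open>t\<close>,
  \<open>act t\<close> the process taking a step at time \<open>t\<close> (if any) and \<open>inp t\<close> its input.\<close>
definition is_run ::
  "('s,'m) algo \<Rightarrow> proc set \<Rightarrow> task list \<Rightarrow> fpat \<Rightarrow> (proc \<Rightarrow> nat)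
    \<Rightarrow> (nat \<Rightarrow> proc \<Rightarrow> 's) \<Rightarrow> (nat \<Rightarrow> proc option) \<Rightarrow> (nat \<Rightarrow> 'm input) \<Rightarrow> bool" where
  "is_run A \<Pi> Os F V st act inp \<longleftrightarrow>
     \<comment> \<open>initial states\<close>
     (\<forall>p. st 0 p = ainit A p (V p)) \<and>
     \<comment> \<open>steps: only non-crashed processes of \<open>\<Pi>\<close> step\<close>
     (\<forall>t. case act t of
            None \<Rightarrow> st (Suc t) = st t
          | Some p \<Rightarrow> p \<in> \<Pi> \<and> p \<notin> F t \<and>
                     st (Suc t) = (st t)(p := fst (atrans A p (st t p) (inp t)))) \<and>
     \<comment> \<open>every correct process takes infinitely many steps\<close>
     (\<forall>p \<in> \<Pi> - Faulty F. \<forall>t. \<exists>t' \<ge> t. act t' = Some p) \<and>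
     \<comment> \<open>reliable channels: every receipt matches a distinct earlier send, and every message
        sent to a correct process is eventually received\<close>
     (\<exists>\<mu> :: nat \<Rightarrow> nat \<times> nat.
        inj_on \<mu> (recv_events act inp) \<and>
        (\<forall>t q p m. act t = Some q \<and> inp t = Recv p m \<longrightarrow>
            fst (\<mu> t) < t \<and> act (fst (\<mu> t)) = Some p \<and>
            snd (\<mu> t) < length (sends A st act inp (fst (\<mu> t))) \<and>
            sends A st act inp (fst (\<mu> t)) ! snd (\<mu> t) = (q, m)) \<and>
        (\<forall>t' i. i < length (sends A st act inp t') \<and>
                fst (sends A st act inp t' ! i) \<in> \<Pi> - Faulty F \<longrightarrow>
                (\<exists>t \<in> recv_events act inp. \<mu> t = (t', i)))) \<and>
     \<comment> \<open>oracles: common response \<open>dd j c\<close> per consultation \<open>c\<close> of oracle \<open>j\<close>\<close>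
     (\<exists>dd :: nat \<Rightarrow> nat \<Rightarrow> nat.
        (\<forall>t p j c d. act t = Some p \<and> inp t = Resp j c d \<longrightarrow>
            j < length Os \<and> p \<in> procs (Os ! j) \<and>
            c < length (qlist A st act inp j p t) \<and>
            d = dd j c \<and> valid_resp A st act inp (Os ! j) F j c d \<and>
            (\<forall>t' < t. \<forall>d'. \<not> (act t' = Some p \<and> inp t' = Resp j c d'))) \<and>
        (\<forall>j < length Os. \<forall>c.
            card (procs (Os ! j)) \<le>
              card {p \<in> procs (Os ! j). \<exists>v. queried A st act inp (procs (Os ! j)) j c p v}
              + res (Os ! j) \<and>
            (\<exists>d. valid_resp A st act inp (Os ! j) F j c d) \<longrightarrow>
            (\<forall>p \<in> \<Pi> - Faulty F. (\<exists>v. queried A st act inp (procs (Os ! j)) j c p v) \<longrightarrow>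
               (\<exists>t. act t = Some p \<and> inp t = Resp j c (dd j c)))))"

definition solves :: "('s,'m) algo \<Rightarrow> task list \<Rightarrow> task \<Rightarrow> bool" where
  "solves A Os T \<longleftrightarrow>
     (\<forall>F V st act inp.
        failure_pattern (procs T) F \<and> card (Faulty F) \<le> res T \<and>
        (\<forall>p \<in> procs T. V p \<in> {0, 1}) \<and>
        is_run A (procs T) Os F V st act inp \<longrightarrow>
          (\<forall>p \<in> procs T - Faulty F. \<exists>t. adec A (st t p) \<noteq> None) \<and>
          (\<forall>p \<in> procs T. \<forall>t d. adec A (st t p) = Some d \<longrightarrow>
               (\<forall>t' \<ge> t. adec A (st t' p) = Some d)) \<and>
          (\<forall>p \<in> procs T. \<forall>q \<in> procs T. \<forall>t t' d d'.
               adec A (st t p) = Some d \<and> adec A (st t' q) = Some d' \<longrightarrow> d = d') \<and>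
          (\<forall>p \<in> procs T. \<forall>t d. adec A (st t p) = Some d \<longrightarrow> d \<in> prob T F V))"

text \<open>\<open>C\<^sup>*\<close>-reduction. Local states and messages are taken in the (countable) type
  \<open>nat list\<close>, which loses no generality for deterministic algorithms.\<close>
definition C_star_red :: "task \<Rightarrow> task \<Rightarrow> bool" where
  "C_star_red T1 T2 \<longleftrightarrow>
     (\<exists>(\<rho>s :: (proc \<Rightarrow> proc) list) (A :: (nat list, nat list) algo).
        (\<forall>\<rho> \<in> set \<rho>s. inj_on \<rho> (procs T2) \<and> \<rho> ` procs T2 \<subseteq> procs T1) \<and>
        solves A (map (renamed_copy T2) \<rho>s) T1)"

end

theory Submission
  imports Defs
begin

definition rho :: "nat \<Rightarrow> nat \<Rightarrow> nat" where
  "rho j p = (if p \<le> j then p else Suc p)"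

definition qs :: "nat \<Rightarrow> nat list \<Rightarrow> (nat \<times> nat) list" where
  "qs n s = map (\<lambda>j. (j, hd s)) [0..<Suc n]"

definition upd :: "nat \<Rightarrow> nat list \<Rightarrow> nat \<Rightarrow> nat \<Rightarrow> nat list" where
  "upd n s j d = (if j \<le> n \<and> s ! Suc j = 0 then s[Suc j := Suc d] else s)"

fun core :: "nat \<Rightarrow> nat list \<Rightarrow> nat list input \<Rightarrow> nat list \<times> (nat \<times> nat list) list" where
  "core n s Null = (s, [])"
| "core n s (Recv q m) = (if length m = 2 then upd n s (m!0) (m!1) else s, [])"
| "core n s (Resp j c d) = (if c = 0 then (upd n s j d, map (\<lambda>q. (q, [j,d])) [1..<n+2]) else (s, []))"

definition tr :: "nat \<Rightarrow> nat \<Rightarrow> nat list \<Rightarrow> nat list input \<Rightarrow> nat list \<times> (nat \<times> nat list) list \<times> (nat \<times> nat) list" where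
  "tr n p s i = (fst (core n s i), snd (core n s i), qs n s)"

definition dec :: "nat \<Rightarrow> nat list \<Rightarrow> nat option" where
  "dec n s = (if \<forall>j\<le>n. s ! Suc j \<noteq> 0 then Some (if \<exists>j\<le>n. s ! Suc j = 1 then 0 else 1) else None)"

definition alg :: "nat \<Rightarrow> (nat list, nat list) algo" where
  "alg n = \<lparr>ainit = (\<lambda>p v. v # replicate (Suc n) 0), atrans = tr n, adec = dec n\<rparr>"

definition Os :: "nat \<Rightarrow> nat \<Rightarrow> nat \<Rightarrow> task list" where
  "Os n k f = map (renamed_copy (kTAg_n n k f)) (map rho [0..<Suc n])"

lemma Os_len[simp]: "length (Os n k f) = Suc n"
  by (simp add: Os_def)

lemma Os_nth: "j \<le> n \<Longrightarrow> Os n k f ! j = renamed_copy (kTAg_n n k f) (rho j)"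
  by (simp add: Os_def del: upt_Suc)

lemma rho_inj: "inj_on (rho j) A"
  by (auto simp: inj_on_def rho_def split: if_splits)

lemma rho_img: "j \<le> n \<Longrightarrow> rho j ` {1..n} = {1..Suc n} - {Suc j}"
proof (intro equalityI subsetI)
  fix x assume "j \<le> n" "x \<in> rho j ` {1..n}" then show "x \<in> {1..Suc n} - {Suc j}"
    by (auto simp: rho_def)
next
  fix x assume a: "j \<le> n" "x \<in> {1..Suc n} - {Suc j}"
  show "x \<in> rho j ` {1..n}"
  proof (cases "x \<le> j")
    case True then show ?thesis using a by (auto simp: rho_def image_def intro!: bexI[of _ x])
  next
    case False then have "x = rho j (x - 1)" "x - 1 \<in> {1..n}" using a by (auto simp: rho_def)
    then show ?thesis by blast
  qed
qed

lemma procs_Os: "j \<le> n \<Longrightarrow> procs (Os n k f ! j) = {1..Suc n} - {Suc j}"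
  using rho_img[of j n] by (simp add: Os_nth renamed_copy_def kTAg_n_def kTAg_def)

lemma res_Os: "j \<le> n \<Longrightarrow> res (Os n k f ! j) = f"
  by (simp add: Os_nth renamed_copy_def kTAg_n_def kTAg_def)

lemma prob_Os: "j \<le> n \<Longrightarrow> prob (Os n k f ! j) G W =
   ktag_prob {1..n} k (\<lambda>t. {p \<in> {1..n}. rho j p \<in> G t}) (W \<circ> rho j)"
  by (simp add: Os_nth renamed_copy_def kTAg_n_def kTAg_def)

lemma qs_filter: "map snd (filter (\<lambda>q. fst q = j) (qs n s)) = (if j \<le> n then [hd s] else [])"
proof -
  have "filter (\<lambda>q. fst q = j) (qs n s) = map (\<lambda>j. (j, hd s)) (filter (\<lambda>i. i = j) [0..<Suc n])"
    by (simp add: qs_def filter_map o_def)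
  moreover have "filter (\<lambda>i. i = j) [0..<Suc n] = (if j \<le> n then [j] else [])"
    by (induction n) auto
  ultimately show ?thesis by auto
qed


lemma upd_len[simp]: "length (upd n s j d) = length s"
  by (simp add: upd_def)

lemma upd_hd[simp]: "length s > 0 \<Longrightarrow> hd (upd n s j d) = hd s"
  by (cases s) (auto simp: upd_def nth_Cons split: nat.splits)

lemma upd_keep: "s ! Suc j \<noteq> 0 \<Longrightarrow> upd n s j' d ! Suc j = s ! Suc j"
  by (cases "j = j'") (auto simp: upd_def)

lemma upd_cases: "upd n s j' d ! Suc j \<noteq> 0 \<Longrightarrow> length s = n + 2 \<Longrightarrow> j \<le> n \<Longrightarrow>
   (upd n s j' d ! Suc j = s ! Suc j \<and> s ! Suc j \<noteq> 0) \<or> (j = j' \<and> upd n s j' d ! Suc j = Suc d)"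
  by (auto simp: upd_def nth_list_update split: if_splits)

lemma upd_set: "length s = n + 2 \<Longrightarrow> j \<le> n \<Longrightarrow> upd n s j d ! Suc j \<noteq> 0"
  by (auto simp: upd_def nth_list_update)

lemma core_len[simp]: "length (fst (core n s i)) = length s"
  by (cases i) auto

lemma core_hd[simp]: "length s > 0 \<Longrightarrow> hd (fst (core n s i)) = hd s"
  by (cases i) auto

locale R =
  fixes n k f :: nat and F :: fpat and V :: "proc \<Rightarrow> nat" and st :: "nat \<Rightarrow> proc \<Rightarrow> nat list"
    and act :: "nat \<Rightarrow> proc option" and inp :: "nat \<Rightarrow> nat list input"
    and \<mu> :: "nat \<Rightarrow> nat \<times> nat" and dd :: "nat \<Rightarrow> nat \<Rightarrow> nat"
  assumes k1: "1 \<le> k" and kn: "k \<le> n" and fn: "f \<le> n - 1"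
    and fp: "failure_pattern {1..n+1} F" and cF: "card (Faulty F) \<le> f"
    and Vb: "\<forall>p\<in>{1..n+1}. V p \<in> {0,1}"
    and init: "\<forall>p. st 0 p = ainit (alg n) p (V p)"
    and stp: "\<forall>t. case act t of None \<Rightarrow> st (Suc t) = st t
          | Some p \<Rightarrow> p \<in> {1..n+1} \<and> p \<notin> F t \<and>
                     st (Suc t) = (st t)(p := fst (atrans (alg n) p (st t p) (inp t)))"
    and fair: "\<forall>p \<in> {1..n+1} - Faulty F. \<forall>t. \<exists>t' \<ge> t. act t' = Some p"
    and mu1: "inj_on \<mu> (recv_events act inp)"
    and mu2: "\<forall>t q p m. act t = Some q \<and> inp t = Recv p m \<longrightarrow>
            fst (\<mu> t) < t \<and> act (fst (\<mu> t)) = Some p \<and>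
            snd (\<mu> t) < length (sends (alg n) st act inp (fst (\<mu> t))) \<and>
            sends (alg n) st act inp (fst (\<mu> t)) ! snd (\<mu> t) = (q, m)"
    and mu3: "\<forall>t' i. i < length (sends (alg n) st act inp t') \<and>
                fst (sends (alg n) st act inp t' ! i) \<in> {1..n+1} - Faulty F \<longrightarrow>
                (\<exists>t \<in> recv_events act inp. \<mu> t = (t', i))"
    and dd1: "\<forall>t p j c d. act t = Some p \<and> inp t = Resp j c d \<longrightarrow>
            j < length (Os n k f) \<and> p \<in> procs (Os n k f ! j) \<and>
            c < length (qlist (alg n) st act inp j p t) \<and>
            d = dd j c \<and> valid_resp (alg n) st act inp (Os n k f ! j) F j c d \<and>
            (\<forall>t' < t. \<forall>d'. \<not> (act t' = Some p \<and> inp t' = Resp j c d'))"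
    and dd2: "\<forall>j < length (Os n k f). \<forall>c.
            card (procs (Os n k f ! j)) \<le>
              card {p \<in> procs (Os n k f ! j). \<exists>v. queried (alg n) st act inp (procs (Os n k f ! j)) j c p v}
              + res (Os n k f ! j) \<and>
            (\<exists>d. valid_resp (alg n) st act inp (Os n k f ! j) F j c d) \<longrightarrow>
            (\<forall>p \<in> {1..n+1} - Faulty F. (\<exists>v. queried (alg n) st act inp (procs (Os n k f ! j)) j c p v) \<longrightarrow>
               (\<exists>t. act t = Some p \<and> inp t = Resp j c (dd j c)))"
begin

lemma step_eq: "st (Suc t) p = (case act t of None \<Rightarrow> st t p
    | Some q \<Rightarrow> if q = p then fst (core n (st t p) (inp t)) else st t p)"
  using spec[OF stp, of t] by (auto simp: alg_def tr_def split: option.splits)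

lemma act_in: "act t = Some p \<Longrightarrow> p \<in> {1..n+1} \<and> p \<notin> F t"
  using spec[OF stp, of t] by auto

lemma shape: "length (st t p) = n + 2 \<and> hd (st t p) = V p"
proof (induction t)
  case 0 then show ?case using init by (simp add: alg_def)
next
  case (Suc t) then show ?case by (auto simp: step_eq split: option.splits)
qed

lemma sends_eq: "sends (alg n) st act inp t = (case act t of None \<Rightarrow> [] | Some p \<Rightarrow> snd (core n (st t p) (inp t)))"
  by (simp add: sends_def step_out_def alg_def tr_def split: option.splits)

lemma queries_eq: "act t = Some p \<Longrightarrow> queries (alg n) st act inp t = qs n (st t p)"
  by (simp add: queries_def step_out_def alg_def tr_def)

lemma qlist_eq: "qlist (alg n) st act inp j p t =
    concat (map (\<lambda>t'. if act t' = Some p \<and> j \<le> n then [V p] else []) [0..<t])"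
  unfolding qlist_def
  by (rule arg_cong[where f=concat], rule map_cong, simp)
     (auto simp: queries_eq qs_filter shape)

lemma qlist_set: "set (qlist (alg n) st act inp j p t) \<subseteq> {V p}"
  by (auto simp: qlist_eq split: if_splits)

lemma queried_V: "queried (alg n) st act inp C j c p v \<Longrightarrow> v = V p"
  unfolding queried_def using qlist_set nth_mem by blast

lemma queried_step: "act t = Some p \<Longrightarrow> p \<in> C \<Longrightarrow> j \<le> n \<Longrightarrow> queried (alg n) st act inp C j 0 p (V p)"
proof -
  assume a: "act t = Some p" "p \<in> C" "j \<le> n"
  have "V p \<in> set (qlist (alg n) st act inp j p (Suc t))"
    using a by (auto simp: qlist_eq)
  then have "qlist (alg n) st act inp j p (Suc t) \<noteq> []" by auto
  then have "0 < length (qlist (alg n) st act inp j p (Suc t))" by simp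
  moreover have "qlist (alg n) st act inp j p (Suc t) ! 0 = V p"
    using qlist_set nth_mem[OF calculation] by blast
  ultimately show ?thesis using a unfolding queried_def by blast
qed

lemma sends_content:
  assumes "i < length (sends (alg n) st act inp t0)" "sends (alg n) st act inp t0 ! i = (p, m)"
  shows "\<exists>j q. j \<le> n \<and> m = [j, dd j 0] \<and> valid_resp (alg n) st act inp (Os n k f ! j) F j 0 (dd j 0)
      \<and> act t0 = Some q \<and> inp t0 = Resp j 0 (dd j 0)"
proof -
  obtain q where q: "act t0 = Some q" using assms by (auto simp: sends_eq split: option.splits)
  then have ne: "snd (core n (st t0 q) (inp t0)) \<noteq> []" using assms by (auto simp: sends_eq)
  then obtain j d where r: "inp t0 = Resp j 0 d"
    by (cases "inp t0") (auto split: if_splits)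
  have "sends (alg n) st act inp t0 = map (\<lambda>q. (q, [j,d])) [1..<n+2]" using q r by (simp add: sends_eq del: upt_Suc)
  then have m: "m = [j, d]" using assms by (auto simp del: upt_Suc)
  show ?thesis using dd1 q r m by fastforce
qed

lemma know: "j \<le> n \<Longrightarrow> st t p ! Suc j \<noteq> 0 \<Longrightarrow>
   st t p ! Suc j = Suc (dd j 0) \<and> valid_resp (alg n) st act inp (Os n k f ! j) F j 0 (dd j 0)"
proof (induction t)
  case 0 then show ?case using init by (simp add: alg_def del: replicate_Suc)
next
  case (Suc t)
  show ?case
  proof (cases "act t = Some p")
    case False
    then have "st (Suc t) p = st t p" by (auto simp: step_eq split: option.splits)
    then show ?thesis using Suc by simp
  next
    case True
    then have e: "st (Suc t) p = fst (core n (st t p) (inp t))" by (simp add: step_eq)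
    show ?thesis
    proof (cases "inp t")
      case Null then show ?thesis using Suc e by simp
    next
      case (Recv q m)
      obtain j' q' where jq: "m = [j', dd j' 0]" "valid_resp (alg n) st act inp (Os n k f ! j') F j' 0 (dd j' 0)"
        using sends_content mu2 True Recv by blast
      have "st (Suc t) p = upd n (st t p) j' (dd j' 0)" using e Recv jq by simp
      then show ?thesis using upd_cases[of n "st t p" j' "dd j' 0" j] Suc shape jq by auto
    next
      case (Resp j' c d)
      show ?thesis
      proof (cases "c = 0")
        case False then show ?thesis using Suc e Resp by simp
      next
        case True
        then have "d = dd j' 0" "valid_resp (alg n) st act inp (Os n k f ! j') F j' 0 (dd j' 0)"
          using dd1 \<open>act t = Some p\<close> Resp by blast+
        moreover have "st (Suc t) p = upd n (st t p) j' d" using e Resp True by simp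
        ultimately show ?thesis using upd_cases[of n "st t p" j' d j] Suc shape by auto
      qed
    qed
  qed
qed

lemma core_keep: "st t p ! Suc j \<noteq> 0 \<Longrightarrow> fst (core n (st t p) i) ! Suc j = st t p ! Suc j"
  by (cases i) (auto simp: upd_keep)

lemma mono_know: assumes "st t p ! Suc j \<noteq> 0" "t \<le> t'" shows "st t' p ! Suc j = st t p ! Suc j"
  using assms(2)
proof (induction t' rule: dec_induct)
  case base then show ?case by simp
next
  case (step m)
  then show ?case using assms(1) by (auto simp: step_eq core_keep split: option.splits)
qed

end

lemma Faulty_ren: "Faulty (\<lambda>t. {p \<in> A. r p \<in> F t \<inter> C}) = {p\<in>A. r p \<in> Faulty F \<inter> C}"
  by (auto simp: Faulty_def)

context R
begin

lemma FF_sub: "Faulty F \<subseteq> {1..n+1}"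
  using fp by (auto simp: failure_pattern_def Faulty_def)

lemma FF_fin: "finite (Faulty F)"
  using FF_sub finite_subset by blast

lemma correct_queried: "j \<le> n \<Longrightarrow> q \<in> procs (Os n k f ! j) \<Longrightarrow> q \<notin> Faulty F \<Longrightarrow>
   queried (alg n) st act inp (procs (Os n k f ! j)) j 0 q (V q)"
proof -
  assume a: "j \<le> n" "q \<in> procs (Os n k f ! j)" "q \<notin> Faulty F"
  then have "q \<in> {1..n+1} - Faulty F" using procs_Os by auto
  then obtain t where "act t = Some q" using fair by blast
  then show ?thesis using queried_step a by blast
qed

lemma valid_ex: assumes j: "j \<le> n" shows "\<exists>d. valid_resp (alg n) st act inp (Os n k f ! j) F j 0 d"
proof -
  define C where "C = procs (Os n k f ! j)"
  define Q where "Q = {q. \<exists>v. queried (alg n) st act inp C j 0 q v}"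
  define FG where "FG = {p\<in>{1..n}. rho j p \<in> Faulty F \<inter> C}"
  have C: "C = rho j ` {1..n}" using procs_Os[OF j] rho_img[OF j] C_def by simp
  have FGfin: "finite FG" unfolding FG_def by simp
  define d where "d = (if (\<forall>q\<in>Q. V q = 1) \<and> card FG \<le> k - 1 then 1 else (0::nat))"
  have "valid_resp (alg n) st act inp (Os n k f ! j) F j 0 d"
    unfolding valid_resp_def
  proof (intro allI impI)
    fix V' assume V': "(\<forall>p\<in>procs (Os n k f ! j). V' p \<in> {0, 1}) \<and>
       (\<forall>p v. queried (alg n) st act inp (procs (Os n k f ! j)) j 0 p v \<longrightarrow> V' p = v)"
    have QV: "q \<in> Q \<Longrightarrow> V' q = V q" for q
      using V' queried_V unfolding Q_def C_def by blast
    define Z where "Z = {p \<in> {1..n}. (V' \<circ> rho j) p = 0}"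
    have pr: "prob (Os n k f ! j) (\<lambda>t. F t \<inter> procs (Os n k f ! j)) V' =
        (if k \<le> card Z then {0}
         else if (\<forall>p\<in>{1..n}. (V' \<circ> rho j) p = 1) \<and> card FG \<le> k - 1 then {1} else {0,1})"
      unfolding prob_Os[OF j] ktag_prob_def Z_def FG_def C_def[symmetric] Faulty_ren by simp
    show "d \<in> prob (Os n k f ! j) (\<lambda>t. F t \<inter> procs (Os n k f ! j)) V'"
    proof (cases "(\<forall>q\<in>Q. V q = 1) \<and> card FG \<le> k - 1")
      case True
      have "Z \<subseteq> FG"
      proof
        fix p assume p: "p \<in> Z"
        then have pC: "rho j p \<in> C" "p \<in> {1..n}" using C Z_def by auto
        have "rho j p \<notin> Q"
        proof
          assume "rho j p \<in> Q"
          then have "V' (rho j p) = 1" using QV True by auto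
          then show False using p Z_def by simp
        qed
        then have "rho j p \<in> Faulty F"
          using correct_queried[OF j] pC unfolding Q_def C_def by blast
        then show "p \<in> FG" using pC FG_def by auto
      qed
      then have "card Z \<le> card FG" using FGfin card_mono by blast
      then have "\<not> k \<le> card Z" using True k1 by linarith
      then show ?thesis using pr True d_def by simp
    next
      case False
      then have d0: "d = 0" using d_def by simp
      have "\<not> ((\<forall>p\<in>{1..n}. (V' \<circ> rho j) p = 1) \<and> card FG \<le> k - 1)"
      proof
        assume h: "(\<forall>p\<in>{1..n}. (V' \<circ> rho j) p = 1) \<and> card FG \<le> k - 1"
        have "\<forall>q\<in>Q. V q = 1"
        proof
          fix q assume q: "q \<in> Q"
          then have "q \<in> C" unfolding Q_def queried_def by blast
          then obtain p where "p \<in> {1..n}" "q = rho j p" using C by blast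
          then show "V q = 1" using h QV[OF q] by simp
        qed
        then show False using False h by simp
      qed
      then show ?thesis using pr d0 by (auto simp: o_def)
    qed
  qed
  then show ?thesis by blast
qed

lemma resp: assumes j: "j \<le> n" and p: "p \<in> {1..n+1} - Faulty F" "p \<noteq> Suc j"
  shows "\<exists>t. act t = Some p \<and> inp t = Resp j 0 (dd j 0)"
proof -
  define C where "C = procs (Os n k f ! j)"
  define QS where "QS = {p \<in> C. \<exists>v. queried (alg n) st act inp C j 0 p v}"
  have C: "C = {1..Suc n} - {Suc j}" using procs_Os[OF j] C_def by simp
  have cC: "card C = n" using C j by simp
  have sub: "C - Faulty F \<subseteq> QS" using correct_queried[OF j] unfolding QS_def C_def by blast
  have fQS: "finite QS" unfolding QS_def using C by simp
  have "card C - card (Faulty F) \<le> card (C - Faulty F)" using diff_card_le_card_Diff FF_fin by blast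
  also have "\<dots> \<le> card QS" using card_mono[OF fQS sub] .
  finally have "card C \<le> card QS + f" using cF by linarith
  then have th: "card C \<le> card QS + res (Os n k f ! j)" using res_Os[OF j] by simp
  have pC: "p \<in> C" using C p by auto
  have "\<exists>v. queried (alg n) st act inp C j 0 p v"
    using correct_queried[OF j] pC p unfolding C_def by blast
  have j': "j < length (Os n k f)" using j by simp
  have imp: "card C \<le> card QS + res (Os n k f ! j) \<and> (\<exists>d. valid_resp (alg n) st act inp (Os n k f ! j) F j 0 d) \<longrightarrow>
            (\<forall>p \<in> {1..n+1} - Faulty F. (\<exists>v. queried (alg n) st act inp C j 0 p v) \<longrightarrow>
               (\<exists>t. act t = Some p \<and> inp t = Resp j 0 (dd j 0)))"
    using dd2 j' unfolding QS_def C_def by blast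
  show ?thesis using mp[OF imp] th valid_ex[OF j] p \<open>\<exists>v. queried (alg n) st act inp C j 0 p v\<close> by blast
qed

lemma learn: assumes j: "j \<le> n" and p: "p \<in> {1..n+1} - Faulty F"
  shows "\<exists>t. st t p ! Suc j \<noteq> 0"
proof (cases "p = Suc j")
  case False
  then obtain t where t: "act t = Some p" "inp t = Resp j 0 (dd j 0)" using resp j p by blast
  then have "st (Suc t) p = upd n (st t p) j (dd j 0)" by (simp add: step_eq)
  then have "st (Suc t) p ! Suc j \<noteq> 0" using upd_set[of "st t p" n j "dd j 0"] shape[of t p] j by simp
  then show ?thesis by blast
next
  case True
  have "Suc n - f \<le> card ({1..n+1} - Faulty F)"
    using diff_card_le_card_Diff[OF FF_fin, of "{1..n+1}"] cF by simp
  then have c2: "2 \<le> card ({1..n+1} - Faulty F)" using fn kn k1 by linarith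
  have "\<exists>q. q \<in> {1..n+1} - Faulty F \<and> q \<noteq> p"
  proof (rule ccontr)
    assume "\<not> ?thesis"
    then have "{1..n+1} - Faulty F \<subseteq> {p}" by blast
    then have "card ({1..n+1} - Faulty F) \<le> 1" using card_mono[of "{p}"] by simp
    then show False using c2 by simp
  qed
  then obtain q where q: "q \<in> {1..n+1} - Faulty F" "q \<noteq> Suc j" using True by blast
  then obtain t where t: "act t = Some q" "inp t = Resp j 0 (dd j 0)" using resp j by blast
  have snd: "sends (alg n) st act inp t = map (\<lambda>q. (q, [j, dd j 0])) [1..<n+2]"
    using t by (simp add: sends_eq del: upt_Suc)
  have i: "j < length (sends (alg n) st act inp t)" using snd j by simp
  have si: "sends (alg n) st act inp t ! j = (Suc j, [j, dd j 0])" using snd j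
    by (simp del: upt_Suc)
  obtain t2 where t2: "t2 \<in> recv_events act inp" "\<mu> t2 = (t, j)"
  proof -
    have "fst (sends (alg n) st act inp t ! j) \<in> {1..n+1} - Faulty F" using si p True by simp
    then show ?thesis using mu3 i that by blast
  qed
  then obtain q2 p2 m where r: "act t2 = Some q2" "inp t2 = Recv p2 m"
    unfolding recv_events_def by blast
  then have "sends (alg n) st act inp t ! j = (q2, m)" using mu2 t2 r by (metis fst_conv snd_conv)
  then have "q2 = p" "m = [j, dd j 0]" using si True by auto
  then have "st (Suc t2) p = upd n (st t2 p) j (dd j 0)" using r by (simp add: step_eq)
  then have "st (Suc t2) p ! Suc j \<noteq> 0" using upd_set[of "st t2 p" n j "dd j 0"] shape[of t2 p] j by simp
  then show ?thesis by blast
qed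

lemma learn_all: assumes p: "p \<in> {1..n+1} - Faulty F"
  shows "m \<le> Suc n \<Longrightarrow> \<exists>T. \<forall>j<m. st T p ! Suc j \<noteq> 0"
proof (induction m)
  case 0 then show ?case by simp
next
  case (Suc m)
  then obtain T where T: "\<forall>j<m. st T p ! Suc j \<noteq> 0" by auto
  obtain t where t: "st t p ! Suc m \<noteq> 0" using learn p Suc.prems by auto
  have "\<forall>j<Suc m. st (max T t) p ! Suc j \<noteq> 0"
  proof (intro allI impI)
    fix j assume "j < Suc m"
    then show "st (max T t) p ! Suc j \<noteq> 0"
      using T t mono_know[of T p j "max T t"] mono_know[of t p m "max T t"]
      by (cases "j = m") auto
  qed
  then show ?case by blast
qed

definition D where "D = (if \<exists>j\<le>n. dd j 0 = 0 then 0 else (1::nat))"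

lemma dec_val: "dec n (st t p) = Some d \<Longrightarrow> d = D \<and> (\<forall>j\<le>n. valid_resp (alg n) st act inp (Os n k f ! j) F j 0 (dd j 0))"
proof -
  assume a: "dec n (st t p) = Some d"
  then have all: "\<forall>j\<le>n. st t p ! Suc j \<noteq> 0" by (simp add: dec_def split: if_splits)
  then have kn: "\<forall>j\<le>n. st t p ! Suc j = Suc (dd j 0) \<and> valid_resp (alg n) st act inp (Os n k f ! j) F j 0 (dd j 0)"
    using know by blast
  then show ?thesis using a all by (auto simp: dec_def D_def)
qed

lemma decides: "p \<in> {1..n+1} - Faulty F \<Longrightarrow> \<exists>t. dec n (st t p) \<noteq> None"
proof -
  assume "p \<in> {1..n+1} - Faulty F"
  then obtain T where "\<forall>j<Suc n. st T p ! Suc j \<noteq> 0" using learn_all[of p "Suc n"] by auto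
  then have "\<forall>j\<le>n. st T p ! Suc j \<noteq> 0" using less_Suc_eq_le by blast
  then show ?thesis by (auto simp: dec_def)
qed

lemma dec_stable: "dec n (st t p) = Some d \<Longrightarrow> t \<le> t' \<Longrightarrow> dec n (st t' p) = Some d"
proof -
  assume a: "dec n (st t p) = Some d" "t \<le> t'"
  then have all: "\<forall>j\<le>n. st t p ! Suc j \<noteq> 0" by (simp add: dec_def split: if_splits)
  have "\<forall>j\<le>n. st t' p ! Suc j \<noteq> 0"
  proof (intro allI impI)
    fix j assume "j \<le> n"
    then show "st t' p ! Suc j \<noteq> 0" using mono_know[of t p j t'] all a(2) by simp
  qed
  then obtain d' where d': "dec n (st t' p) = Some d'" by (simp add: dec_def)
  then show ?thesis using dec_val[OF a(1)] dec_val[OF d'] by simp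
qed

end

lemma zeros_card: assumes j: "j \<le> n"
  shows "card {p\<in>{1..n}. (W \<circ> rho j) p = 0} = card {q\<in>{1..Suc n} - {Suc j}. W q = 0}"
proof -
  have "rho j ` {p\<in>{1..n}. (W \<circ> rho j) p = 0} = {q \<in> rho j ` {1..n}. W q = 0}" by auto
  also have "\<dots> = {q\<in>{1..Suc n} - {Suc j}. W q = 0}" using rho_img[OF j] by simp
  moreover have "card (rho j ` {p\<in>{1..n}. (W \<circ> rho j) p = 0}) = card {p\<in>{1..n}. (W \<circ> rho j) p = 0}"
    by (rule card_image[OF rho_inj])
  ultimately show ?thesis by simp
qed

context R
begin

lemma prob_j: assumes j: "j \<le> n" and v: "valid_resp (alg n) st act inp (Os n k f ! j) F j 0 (dd j 0)"
  shows "dd j 0 \<in> ktag_prob {1..n} k (\<lambda>t. {p\<in>{1..n}. rho j p \<in> F t \<inter> procs (Os n k f ! j)}) (V \<circ> rho j)"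
proof -
  have "\<forall>p\<in>procs (Os n k f ! j). V p \<in> {0, 1}" using procs_Os[OF j] Vb by auto
  moreover have "\<forall>p v. queried (alg n) st act inp (procs (Os n k f ! j)) j 0 p v \<longrightarrow> V p = v"
    by (auto dest: queried_V)
  ultimately have "dd j 0 \<in> prob (Os n k f ! j) (\<lambda>t. F t \<inter> procs (Os n k f ! j)) V"
    using v unfolding valid_resp_def by blast
  then show ?thesis using prob_Os[OF j] by simp
qed

lemma D_valid: assumes v: "\<forall>j\<le>n. valid_resp (alg n) st act inp (Os n k f ! j) F j 0 (dd j 0)"
  shows "D \<in> ktag_prob {1..n+1} k F V"
proof (cases "k \<le> card {p\<in>{1..n+1}. V p = 0}")
  case True
  obtain j where j: "j \<le> n" and cj: "k \<le> card {q\<in>{1..Suc n} - {Suc j}. V q = 0}"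
  proof (cases "\<exists>p0\<in>{1..n+1}. V p0 \<noteq> 0")
    case True
    then obtain p0 where p0: "p0 \<in> {1..n+1}" "V p0 \<noteq> 0" by blast
    have eq: "{q\<in>{1..Suc n} - {Suc (p0 - 1)}. V q = 0} = {p\<in>{1..n+1}. V p = 0}" using p0 by auto
    have c1: "k \<le> card {q\<in>{1..Suc n} - {Suc (p0 - 1)}. V q = 0}"
      unfolding eq by (rule \<open>k \<le> card {p\<in>{1..n+1}. V p = 0}\<close>)
    have c2: "p0 - 1 \<le> n" using p0 by auto
    show ?thesis by (rule that[OF c2 c1])
  next
    case False
    then have "{q\<in>{1..Suc n} - {Suc n}. V q = 0} = {1..n}" by auto
    then show ?thesis using that[of n] kn by simp
  qed
  have "dd j 0 \<in> ktag_prob {1..n} k (\<lambda>t. {p\<in>{1..n}. rho j p \<in> F t \<inter> procs (Os n k f ! j)}) (V \<circ> rho j)"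
    using prob_j j v by blast
  then have "dd j 0 = 0" using cj zeros_card[OF j, of V] unfolding ktag_prob_def by simp
  then have "D = 0" using j D_def by auto
  then show ?thesis using True unfolding ktag_prob_def by simp
next
  case False
  show ?thesis
  proof (cases "(\<forall>p\<in>{1..n+1}. V p = 1) \<and> card (Faulty F) \<le> k - 1")
    case True
    have "\<forall>j\<le>n. dd j 0 \<noteq> 0"
    proof (intro allI impI)
      fix j assume j: "j \<le> n"
      have m: "dd j 0 \<in> ktag_prob {1..n} k (\<lambda>t. {p\<in>{1..n}. rho j p \<in> F t \<inter> procs (Os n k f ! j)}) (V \<circ> rho j)"
        using prob_j j v by blast
      have ones: "\<forall>p\<in>{1..n}. (V \<circ> rho j) p = 1" using True rho_img[OF j] by auto
      then have z: "{p\<in>{1..n}. (V \<circ> rho j) p = 0} = {}" by auto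
      have "{p\<in>{1..n}. rho j p \<in> Faulty F \<inter> procs (Os n k f ! j)} \<subseteq> {p. rho j p \<in> Faulty F}" by auto
      have "rho j ` {p\<in>{1..n}. rho j p \<in> Faulty F \<inter> procs (Os n k f ! j)} \<subseteq> Faulty F" by auto
      then have "card (rho j ` {p\<in>{1..n}. rho j p \<in> Faulty F \<inter> procs (Os n k f ! j)}) \<le> card (Faulty F)"
        using card_mono FF_fin by blast
      moreover have "card (rho j ` {p\<in>{1..n}. rho j p \<in> Faulty F \<inter> procs (Os n k f ! j)}) = card {p\<in>{1..n}. rho j p \<in> Faulty F \<inter> procs (Os n k f ! j)}"
        by (rule card_image[OF rho_inj])
      ultimately have cf: "card {p\<in>{1..n}. rho j p \<in> Faulty F \<inter> procs (Os n k f ! j)} \<le> k - 1"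
        using True by linarith
      have ncond: "\<not> k \<le> card {p\<in>{1..n}. (V \<circ> rho j) p = 0}" unfolding z using k1 by simp
      have cond: "(\<forall>p\<in>{1..n}. (V \<circ> rho j) p = 1) \<and> card {p\<in>{1..n}. rho j p \<in> Faulty F \<inter> procs (Os n k f ! j)} \<le> k - 1"
        using ones cf by blast
      have "dd j 0 = 1" using m unfolding ktag_prob_def Faulty_ren if_not_P[OF ncond] if_P[OF cond] by simp
      then show "dd j 0 \<noteq> 0" by simp
    qed
    then have "D = 1" using D_def by auto
    then show ?thesis using False True unfolding ktag_prob_def by simp
  next
    case False2: False
    have "D \<in> {0,1}" by (simp add: D_def)
    then show ?thesis unfolding ktag_prob_def if_not_P[OF False] if_not_P[OF False2] by simp
  qed
qed

end

lemma R_intro: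
  assumes "1 \<le> k" "k \<le> n" "f \<le> n - 1" "failure_pattern {1..n+1} F" "card (Faulty F) \<le> f"
    "\<forall>p\<in>{1..n+1}. V p \<in> {0,1}" "is_run (alg n) {1..n+1} (Os n k f) F V st act inp"
  shows "\<exists>\<mu> dd. R n k f F V st act inp \<mu> dd"
  using assms(7)[unfolded is_run_def]
  apply (elim conjE exE)
  apply (rule exI, rule exI)
  apply (unfold R_def)
  apply (intro conjI)
  apply (assumption | rule assms)+
  done

lemma adec_alg[simp]: "adec (alg n) = dec n" by (simp add: alg_def)

theorem mainTheorem8:
  fixes n f k :: nat
  assumes "1 \<le> f" and "f \<le> n - 1" and "1 \<le> k" and "k \<le> n"
  shows "C_star_red (kTAg_n (n + 1) k f) (kTAg_n n k f)"
proof -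
  have pr: "procs (kTAg_n (n+1) k f) = {1..n+1}" "res (kTAg_n (n+1) k f) = f"
    "prob (kTAg_n (n+1) k f) = ktag_prob {1..n+1} k" "procs (kTAg_n n k f) = {1..n}"
    by (simp_all add: kTAg_n_def kTAg_def)
  have "solves (alg n) (Os n k f) (kTAg_n (n+1) k f)"
    unfolding solves_def pr
  proof (intro allI impI)
    fix F V st act inp
    assume a: "failure_pattern {1..n+1} F \<and> card (Faulty F) \<le> f \<and> (\<forall>p\<in>{1..n+1}. V p \<in> {0, 1}) \<and>
       is_run (alg n) {1..n+1} (Os n k f) F V st act inp"
    then obtain \<mu> dd where "R n k f F V st act inp \<mu> dd"
      using R_intro[of k n f F V st act inp] assms by blast
    then interpret R n k f F V st act inp \<mu> dd .
    show "(\<forall>p\<in>{1..n + 1} - Faulty F. \<exists>t. adec (alg n) (st t p) \<noteq> None) \<and>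
         (\<forall>p\<in>{1..n + 1}. \<forall>t d. adec (alg n) (st t p) = Some d \<longrightarrow> (\<forall>t'\<ge>t. adec (alg n) (st t' p) = Some d)) \<and>
         (\<forall>p\<in>{1..n + 1}. \<forall>q\<in>{1..n + 1}. \<forall>t t' d d'.
             adec (alg n) (st t p) = Some d \<and> adec (alg n) (st t' q) = Some d' \<longrightarrow> d = d') \<and>
         (\<forall>p\<in>{1..n + 1}. \<forall>t d. adec (alg n) (st t p) = Some d \<longrightarrow> d \<in> ktag_prob {1..n + 1} k F V)"
    proof (intro conjI ballI allI impI)
      fix p assume "p \<in> {1..n + 1} - Faulty F"
      then have "\<exists>t. dec n (st t p) \<noteq> None" by (rule decides)
      then show "\<exists>t. adec (alg n) (st t p) \<noteq> None" by simp
    next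
      fix p t d t' assume "adec (alg n) (st t p) = Some d" "t \<le> t'"
      then have "dec n (st t p) = Some d" "t \<le> t'" by simp_all
      then have "dec n (st t' p) = Some d" by (rule dec_stable)
      then show "adec (alg n) (st t' p) = Some d" by simp
    next
      fix p q t t' d d' assume "adec (alg n) (st t p) = Some d \<and> adec (alg n) (st t' q) = Some d'"
      then have "dec n (st t p) = Some d" "dec n (st t' q) = Some d'" by simp_all
      then show "d = d'" using dec_val[of t p d] dec_val[of t' q d'] by simp
    next
      fix p t d assume "adec (alg n) (st t p) = Some d"
      then have "dec n (st t p) = Some d" by simp
      then have "d = D" "\<forall>j\<le>n. valid_resp (alg n) st act inp (Os n k f ! j) F j 0 (dd j 0)"
        using dec_val by blast+
      then show "d \<in> ktag_prob {1..n + 1} k F V" using D_valid by simp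
    qed
  qed
  moreover have "\<forall>\<rho>\<in>set (map rho [0..<Suc n]). inj_on \<rho> (procs (kTAg_n n k f)) \<and>
      \<rho> ` procs (kTAg_n n k f) \<subseteq> procs (kTAg_n (n + 1) k f)"
  proof
    fix \<rho> assume "\<rho> \<in> set (map rho [0..<Suc n])"
    then obtain j where "j < Suc n" "\<rho> = rho j" by (auto simp del: upt_Suc)
    then have j: "j \<le> n" "\<rho> = rho j" by simp_all
    then show "inj_on \<rho> (procs (kTAg_n n k f)) \<and> \<rho> ` procs (kTAg_n n k f) \<subseteq> procs (kTAg_n (n + 1) k f)"
      using rho_inj rho_img[OF j(1)] pr by auto
  qed
  ultimately show ?thesis unfolding C_star_red_def Os_def
    by (intro exI[of _ "map rho [0..<Suc n]"] exI[of _ "alg n"] conjI)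
qed

end
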